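(* Let $n\ge1$ and for each $i\in[n]$ let $X_i$ have the $\mathrm{Beta}(i,n-i+1)$ distribution, with arbitrary joint distribution. Then for $0<s\le n/2$ the value $t(n,s)$ defined by $s=\sum_{i=1}^n\int_0^{t(n,s)}x\,dF_i(x)$ ($F_i$ the distribution function of $X_i$) equals $(2s/n)^{1/2}$, and $$ \mathbb{E}\Big[\max\Big\{|A|: A\subset[n],\ \sum_{i\in A}X_i\le 1\Big\}\Big]\le \sqrt{2n}. $$ *)

theory Defs
  imports "HOL-Probability.Probability"
begin

definition beta_density :: "real \<Rightarrow> real \<Rightarrow> real \<Rightarrow> real" where
  "beta_density a b x =
     (if 0 < x \<and> x < 1 then x powr (a - 1) * (1 - x) powr (b - 1) / Beta a b else 0)"

definition max_fit :: "nat \<Rightarrow> (nat \<Rightarrow> 'a \<Rightarrow> real) \<Rightarrow> 'a \<Rightarrow> nat" where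
  "max_fit n X \<omega> = Max {card A | A. A \<subseteq> {1..n} \<and> (\<Sum>i\<in>A. X i \<omega>) \<le> 1}"

end

theory Submission imports Defs begin

lemma Beta_nat:
  fixes j m :: nat assumes "j \<le> m"
  shows "Beta (real (Suc j)) (real (Suc (m - j))) = fact j * fact (m - j) / fact (Suc m)"
proof -
  have g1: "Gamma (real (Suc j)) = fact j" using Gamma_fact[of j, where 'a=real] by (simp add: add.commute)
  have g2: "Gamma (real (Suc (m-j))) = fact (m-j)" using Gamma_fact[of "m-j", where 'a=real] by (simp add: add.commute)
  have "real (Suc j) + real (Suc (m - j)) = 1 + real (Suc m)" using assms by simp
  hence g3: "Gamma (real (Suc j) + real (Suc (m - j))) = fact (Suc m)"
    using Gamma_fact[of "Suc m", where 'a=real] by simp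
  show ?thesis unfolding Beta_def g1 g2 g3 ..
qed

lemma beta_term:
  fixes j m :: nat and x :: real assumes "j \<le> m" "0 < x" "x < 1"
  shows "beta_density (real (Suc j)) (real (Suc m - Suc j + 1)) x
         = real (Suc m) * (real (m choose j) * x ^ j * (1 - x) ^ (m - j))"
proof -
  have e: "Suc m - Suc j + 1 = Suc (m - j)" using assms by simp
  have p1: "x powr (real (Suc j) - 1) = x ^ j" using assms by (simp add: powr_realpow)
  have p2: "(1 - x) powr (real (Suc (m - j)) - 1) = (1 - x) ^ (m - j)"
    using assms powr_realpow[of "1-x" "m-j"] by simp
  have c: "real (m choose j) = fact m / (fact j * fact (m - j))" using binomial_fact[OF assms(1)] by simp
  have "beta_density (real (Suc j)) (real (Suc m - Suc j + 1)) x
      = x ^ j * (1 - x) ^ (m - j) / (fact j * fact (m - j) / fact (Suc m))"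
    unfolding beta_density_def e p1 p2 Beta_nat[OF assms(1)] using assms by simp
  also have "\<dots> = real (Suc m) * (real (m choose j) * x ^ j * (1 - x) ^ (m - j))"
    unfolding c by (simp add: field_simps)
  finally show ?thesis .
qed

lemma beta_sum:
  fixes m :: nat and x :: real assumes "0 < x" "x < 1"
  shows "(\<Sum>i=1..Suc m. beta_density (real i) (real (Suc m - i + 1)) x) = real (Suc m)"
proof -
  have "(\<Sum>i=1..Suc m. beta_density (real i) (real (Suc m - i + 1)) x)
      = (\<Sum>j=0..m. beta_density (real (Suc j)) (real (Suc m - Suc j + 1)) x)"
    using sum.shift_bounds_cl_Suc_ivl[of "\<lambda>i. beta_density (real i) (real (Suc m - i + 1)) x" 0 m]
    by simp
  also have "\<dots> = (\<Sum>j=0..m. real (Suc m) * (real (m choose j) * x ^ j * (1 - x) ^ (m - j)))"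
    by (rule sum.cong) (use assms beta_term in auto)
  also have "\<dots> = real (Suc m) * (x + (1 - x)) ^ m"
    unfolding binomial_ring[of x "1-x" m] sum_distrib_left atLeast0AtMost by simp
  finally show ?thesis by simp
qed


lemma beta_nonneg:
  fixes m i :: nat and x :: real assumes "i \<in> {1..Suc m}"
  shows "0 \<le> beta_density (real i) (real (Suc m - i + 1)) x"
proof (cases "0 < x \<and> x < 1")
  case True
  obtain j where j: "i = Suc j" "j \<le> m" using assms by (cases i) auto
  show ?thesis unfolding j(1) using beta_term[OF j(2)] True by simp
next
  case False thus ?thesis by (auto simp: beta_density_def)
qed

lemma beta_sum_all:
  fixes m :: nat and x :: real
  shows "(\<Sum>i=1..Suc m. beta_density (real i) (real (Suc m - i + 1)) x)
          = real (Suc m) * indicator {0<..<1} x"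
proof (cases "0 < x \<and> x < 1")
  case True thus ?thesis using beta_sum[of x m] by (simp add: indicator_def)
next
  case False
  have z: "\<And>a b. beta_density a b x = 0" using False by (auto simp: beta_density_def)
  show ?thesis using False by (simp add: z indicator_def)
qed

lemma dens_nn:
  assumes D: "distributed M lborel Y (\<lambda>x. ennreal (f x))"
    and h: "h \<in> borel_measurable borel"
  shows "(\<integral>\<^sup>+x. h x \<partial>(distr M lborel Y)) = (\<integral>\<^sup>+x. ennreal (f x) * h x \<partial>lborel)"
proof -
  have "distr M lborel Y = density lborel (\<lambda>x. ennreal (f x))"
    using distributed_distr_eq_density[OF D] .
  moreover have "(\<lambda>x. ennreal (f x)) \<in> borel_measurable lborel"
    using distributed_borel_measurable[OF D] .
  ultimately show ?thesis using h by (simp add: nn_integral_density)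
qed

lemma sum_dens_nn:
  fixes X :: "nat \<Rightarrow> 'a \<Rightarrow> real"
  assumes D: "\<And>i. i \<in> {1..Suc m} \<Longrightarrow>
           distributed M lborel (X i)
             (\<lambda>x. ennreal (beta_density (real i) (real (Suc m - i + 1)) x))"
    and h: "h \<in> borel_measurable borel"
  shows "(\<Sum>i=1..Suc m. \<integral>\<^sup>+x. h x \<partial>(distr M lborel (X i)))
       = (\<integral>\<^sup>+x. ennreal (real (Suc m) * indicator {0<..<1} x) * h x \<partial>lborel)"
proof -
  have "(\<Sum>i=1..Suc m. \<integral>\<^sup>+x. h x \<partial>(distr M lborel (X i)))
     = (\<Sum>i=1..Suc m. \<integral>\<^sup>+x. ennreal (beta_density (real i) (real (Suc m - i + 1)) x) * h x \<partial>lborel)"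
  proof (rule sum.cong[OF refl])
    fix i assume "i \<in> {1..Suc m}"
    from dens_nn[OF D[OF this] h] show "(\<integral>\<^sup>+x. h x \<partial>(distr M lborel (X i))) =
      (\<integral>\<^sup>+x. ennreal (beta_density (real i) (real (Suc m - i + 1)) x) * h x \<partial>lborel)" .
  qed
  also have "\<dots> = (\<integral>\<^sup>+x. (\<Sum>i=1..Suc m. ennreal (beta_density (real i) (real (Suc m - i + 1)) x) * h x) \<partial>lborel)"
    by (rule nn_integral_sum[symmetric])
       (use distributed_borel_measurable[OF D] h in \<open>auto simp: measurable_lborel1\<close>)
  also have "\<dots> = (\<integral>\<^sup>+x. ennreal (real (Suc m) * indicator {0<..<1} x) * h x \<partial>lborel)"
  proof (rule nn_integral_cong)
    fix x :: real
    have "(\<Sum>i=1..Suc m. ennreal (beta_density (real i) (real (Suc m - i + 1)) x))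
        = ennreal (\<Sum>i=1..Suc m. beta_density (real i) (real (Suc m - i + 1)) x)"
      by (rule sum_ennreal) (rule beta_nonneg)
    have "(\<Sum>i=1..Suc m. ennreal (beta_density (real i) (real (Suc m - i + 1)) x) * h x)
      = (\<Sum>i=1..Suc m. ennreal (beta_density (real i) (real (Suc m - i + 1)) x)) * h x"
      by (rule sum_distrib_right[symmetric])
    also have "\<dots> = ennreal (real (Suc m) * indicator {0<..<1} x) * h x"
      unfolding \<open>(\<Sum>i=1..Suc m. ennreal _) = _\<close> beta_sum_all ..
    finally show "(\<Sum>i=1..Suc m. ennreal (beta_density (real i) (real (Suc m - i + 1)) x) * h x)
        = ennreal (real (Suc m) * indicator {0<..<1} x) * h x" .
  qed
  finally show ?thesis .
qed

lemma hasint1: "0 \<le> t \<Longrightarrow> ((\<lambda>x::real. c * x) has_integral c * t^2/2) {0..t}"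
proof -
  assume t: "0 \<le> t"
  have "((\<lambda>x::real. c * x) has_integral (c * t^2/2 - c * 0^2/2)) {0..t}"
  proof (rule fundamental_theorem_of_calculus[OF t])
    fix x :: real
    have "((\<lambda>x::real. c * x^2/2) has_real_derivative c * x) (at x within {0..t})"
      by (rule derivative_eq_intros refl | simp)+
    thus "((\<lambda>x::real. c * x^2/2) has_vector_derivative c * x) (at x within {0..t})"
      by (simp add: has_real_derivative_iff_has_vector_derivative)
  qed
  thus ?thesis by simp
qed

lemma hasint2: "0 < t \<Longrightarrow> ((\<lambda>x::real. c * (1 - x/t)) has_integral c * t/2) {0..t}"
proof -
  assume t: "0 < t"
  have h: "((\<lambda>x::real. c * (1 - x/t)) has_integral ((c * t - c * t^2/(2*t)) - (c*0 - c * 0^2/(2*t)))) {0..t}"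
  proof (rule fundamental_theorem_of_calculus)
    show "0 \<le> t" using t by simp
    fix x :: real
    have "((\<lambda>x::real. c * x - c * x^2/(2*t)) has_real_derivative c * (1 - x/t)) (at x within {0..t})"
      by (rule derivative_eq_intros refl | use t in \<open>simp add: field_simps\<close>)+
    thus "((\<lambda>x::real. c * x - c * x^2/(2*t)) has_vector_derivative c * (1 - x/t)) (at x within {0..t})"
      by (simp add: has_real_derivative_iff_has_vector_derivative)
  qed
  have e: "(c * t - c * t^2/(2*t)) - (c*0 - c * 0^2/(2*t)) = c * t / 2"
    using t by (simp add: field_simps power2_eq_square)
  show ?thesis using h unfolding e .
qed

definition gfun :: "real \<Rightarrow> real \<Rightarrow> real" where
  "gfun t x = (if x \<le> t then 1 - x / t else 0)"

lemma int1:
  assumes "0 \<le> t" "t \<le> 1"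
  shows "(\<integral>\<^sup>+x. ennreal (real N * indicator {0<..<1} x) * ennreal (indicator {0..t} x * x) \<partial>lborel)
        = ennreal (real N * t^2/2)"
proof -
  have "AE x in lborel. ennreal (real N * indicator {0<..<1} x) * ennreal (indicator {0..t} x * x)
        = ennreal (indicator {0..t} x * (real N * x))"
    using AE_lborel_singleton[of "1::real"]
    by eventually_elim (use assms in \<open>auto simp: indicator_def ennreal_mult'[symmetric]\<close>)
  hence "(\<integral>\<^sup>+x. ennreal (real N * indicator {0<..<1} x) * ennreal (indicator {0..t} x * x) \<partial>lborel)
     = (\<integral>\<^sup>+x. ennreal (indicator {0..t} x * (real N * x)) \<partial>lborel)"
    by (rule nn_integral_cong_AE)
  also have "\<dots> = ennreal (real N * t^2/2)"
    by (rule nn_integral_has_integral_lebesgue) (auto intro: hasint1 assms)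
  finally show ?thesis .
qed

lemma int2:
  assumes "0 < t" "t \<le> 1"
  shows "(\<integral>\<^sup>+x. ennreal (real N * indicator {0<..<1} x) * ennreal (gfun t x) \<partial>lborel)
        = ennreal (real N * t/2)"
proof -
  have "AE x in lborel. ennreal (real N * indicator {0<..<1} x) * ennreal (gfun t x)
        = ennreal (indicator {0..t} x * (real N * (1 - x/t)))"
    using AE_lborel_singleton[of "1::real"] AE_lborel_singleton[of "0::real"]
    by eventually_elim (use assms in \<open>auto simp: indicator_def gfun_def ennreal_mult'[symmetric]\<close>)
  hence "(\<integral>\<^sup>+x. ennreal (real N * indicator {0<..<1} x) * ennreal (gfun t x) \<partial>lborel)
     = (\<integral>\<^sup>+x. ennreal (indicator {0..t} x * (real N * (1 - x/t))) \<partial>lborel)"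
    by (rule nn_integral_cong_AE)
  also have "\<dots> = ennreal (real N * t/2)"
    by (rule nn_integral_has_integral_lebesgue) (use assms in \<open>auto intro: hasint2\<close>)
  finally show ?thesis .
qed


lemma gfun_nonneg: "0 < t \<Longrightarrow> 0 \<le> gfun t x"
  by (simp add: gfun_def field_simps)

lemma max_fit_facts:
  fixes X :: "nat \<Rightarrow> 'a \<Rightarrow> real"
  obtains A where "max_fit n X \<omega> = card A" "A \<subseteq> {1..n}" "(\<Sum>i\<in>A. X i \<omega>) \<le> 1"
proof -
  let ?S = "{card A | A. A \<subseteq> {1..n} \<and> (\<Sum>i\<in>A. X i \<omega>) \<le> 1}"
  have fin: "finite ?S"
    by (rule finite_subset[of _ "card ` Pow {1..n}"]) auto
  have "card {} \<in> ?S" by force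
  hence ne: "?S \<noteq> {}" by blast
  show ?thesis using Max_in[OF fin ne] that unfolding max_fit_def by auto
qed

lemma max_fit_le: "max_fit n X \<omega> \<le> n"
proof -
  obtain A where A: "max_fit n X \<omega> = card A" "A \<subseteq> {1..n}" by (rule max_fit_facts)
  have "card A \<le> card {1..n}" by (rule card_mono) (use A in auto)
  thus ?thesis using A by simp
qed

lemma max_fit_bound:
  fixes X :: "nat \<Rightarrow> 'a \<Rightarrow> real" assumes t: "0 < t"
  shows "real (max_fit n X \<omega>) \<le> (\<Sum>i=1..n. gfun t (X i \<omega>)) + 1/t"
proof -
  obtain A where A: "max_fit n X \<omega> = card A" "A \<subseteq> {1..n}" "(\<Sum>i\<in>A. X i \<omega>) \<le> 1"
    by (rule max_fit_facts)
  have "real (card A) = (\<Sum>i\<in>A. 1::real)" by simp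
  also have "\<dots> \<le> (\<Sum>i\<in>A. gfun t (X i \<omega>) + X i \<omega> / t)"
    by (rule sum_mono) (use t in \<open>auto simp: gfun_def field_simps\<close>)
  also have "\<dots> = (\<Sum>i\<in>A. gfun t (X i \<omega>)) + (\<Sum>i\<in>A. X i \<omega>) / t"
    by (simp add: sum.distrib sum_divide_distrib)
  also have "\<dots> \<le> (\<Sum>i=1..n. gfun t (X i \<omega>)) + 1/t"
  proof (rule add_mono)
    show "(\<Sum>i\<in>A. gfun t (X i \<omega>)) \<le> (\<Sum>i=1..n. gfun t (X i \<omega>))"
      by (rule sum_mono2[OF finite_atLeastAtMost A(2)]) (use gfun_nonneg t in auto)
    show "(\<Sum>i\<in>A. X i \<omega>) / t \<le> 1 / t"
      by (rule divide_right_mono[OF A(3)]) (use t in simp)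
  qed
  finally show ?thesis using A(1) by simp
qed

theorem mainTheorem7:
  fixes M :: "'a measure" and X :: "nat \<Rightarrow> 'a \<Rightarrow> real" and n :: nat
  assumes "prob_space M"
    and "n \<ge> 1"
    and "\<And>i. i \<in> {1..n} \<Longrightarrow>
           distributed M lborel (X i)
             (\<lambda>x. ennreal (beta_density (real i) (real (n - i + 1)) x))"
  shows "(\<forall>s::real. 0 < s \<and> s \<le> real n / 2 \<longrightarrow>
            (\<forall>t::real. 0 \<le> t \<and> t \<le> 1 \<longrightarrow>
               ((\<Sum>i=1..n. (LINT x:{0..t}|distr M lborel (X i). x)) = s
                 \<longleftrightarrow> t = sqrt (2 * s / real n))))
         \<and> (\<integral>\<^sup>+ \<omega>. ennreal (real (max_fit n X \<omega>)) \<partial>M) \<le> ennreal (sqrt (2 * real n))"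
proof -
  have P: "prob_space M" by fact
  obtain m where n: "n = Suc m" using assms(2) by (cases n) auto
  note SD = sum_dens_nn[where m=m and X=X and M=M, folded n, OF assms(3)]
  have meas: "\<And>i. i \<in> {1..n} \<Longrightarrow> X i \<in> borel_measurable M"
    using distributed_measurable[OF assms(3)] by simp
  have S: "(\<Sum>i=1..n. LINT x:{0..t}|distr M lborel (X i). x) = real n * t^2/2"
    if t: "0 \<le> t" "t \<le> 1" for t :: real
  proof -
    have L: "ennreal (LINT x:{0..t}|distr M lborel (X i). x)
        = (\<integral>\<^sup>+x. ennreal (indicator {0..t} x * x) \<partial>distr M lborel (X i))"
      if i: "i \<in> {1..n}" for i
    proof -
      interpret N: prob_space "distr M lborel (X i)"
        by (rule prob_space.prob_space_distr[OF P]) (use meas[OF i] in simp)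
      have int: "integrable (distr M lborel (X i)) (\<lambda>x. indicator {0..t} x *\<^sub>R x)"
        by (rule N.integrable_const_bound[where B=t]) (use t in \<open>auto simp: indicator_def\<close>)
      have "(\<integral>\<^sup>+ x. ennreal (indicator {0..t} x *\<^sub>R x) \<partial>distr M lborel (X i))
          = ennreal (integral\<^sup>L (distr M lborel (X i)) (\<lambda>x. indicator {0..t} x *\<^sub>R x))"
        by (rule nn_integral_eq_integral[OF int]) (auto simp: indicator_def)
      thus ?thesis unfolding set_lebesgue_integral_def by simp
    qed
    have nonneg: "0 \<le> (LINT x:{0..t}|distr M lborel (X i). x)" for i
      unfolding set_lebesgue_integral_def by (rule integral_nonneg_AE) (auto simp: indicator_def)
    have "ennreal (\<Sum>i=1..n. LINT x:{0..t}|distr M lborel (X i). x)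
        = (\<Sum>i=1..n. ennreal (LINT x:{0..t}|distr M lborel (X i). x))"
      by (rule sum_ennreal[symmetric]) (rule nonneg)
    also have "\<dots> = (\<Sum>i=1..n. \<integral>\<^sup>+x. ennreal (indicator {0..t} x * x) \<partial>distr M lborel (X i))"
      by (rule sum.cong[OF refl]) (rule L)
    also have "\<dots> = (\<integral>\<^sup>+x. ennreal (real n * indicator {0<..<1} x) * ennreal (indicator {0..t} x * x) \<partial>lborel)"
      by (rule SD) measurable
    also have "\<dots> = ennreal (real n * t^2/2)" by (rule int1[OF t])
    finally show ?thesis
      using t by (subst (asm) ennreal_inj) (auto intro!: sum_nonneg nonneg)
  qed
  have part1: "\<forall>s::real. 0 < s \<and> s \<le> real n / 2 \<longrightarrow>
            (\<forall>t::real. 0 \<le> t \<and> t \<le> 1 \<longrightarrow>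
               ((\<Sum>i=1..n. (LINT x:{0..t}|distr M lborel (X i). x)) = s
                 \<longleftrightarrow> t = sqrt (2 * s / real n)))"
  proof (intro allI impI)
    fix s t :: real assume s: "0 < s \<and> s \<le> real n / 2" and t: "0 \<le> t \<and> t \<le> 1"
    have np: "real n > 0" using n by simp
    have "(real n * t^2/2 = s) \<longleftrightarrow> t^2 = 2 * s / real n" using np by (auto simp: field_simps)
    also have "\<dots> \<longleftrightarrow> t = sqrt (2 * s / real n)"
    proof
      assume "t^2 = 2 * s / real n" thus "t = sqrt (2 * s / real n)"
        using t real_sqrt_unique[of t] by metis
    next
      assume "t = sqrt (2 * s / real n)" thus "t^2 = 2 * s / real n"
        using s np by simp
    qed
    finally show "((\<Sum>i=1..n. (LINT x:{0..t}|distr M lborel (X i). x)) = s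
                 \<longleftrightarrow> t = sqrt (2 * s / real n))" unfolding S[OF conjunct1[OF t] conjunct2[OF t]] .
  qed
  have part2: "(\<integral>\<^sup>+ \<omega>. ennreal (real (max_fit n X \<omega>)) \<partial>M) \<le> ennreal (sqrt (2 * real n))"
  proof (cases "m = 0")
    case True
    have "(\<integral>\<^sup>+ \<omega>. ennreal (real (max_fit n X \<omega>)) \<partial>M) \<le> (\<integral>\<^sup>+ \<omega>. 1 \<partial>M)"
      by (rule nn_integral_mono) (use max_fit_le[of n X] n True in auto)
    also have "\<dots> = 1" using prob_space.emeasure_space_1[OF P] by simp
    also have "\<dots> \<le> ennreal (sqrt (2 * real n))" using n True by simp
    finally show ?thesis .
  next
    case False
    define t where "t = sqrt (2 * real n) / real n"
    have np: "real n \<ge> 2" using n False by simp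
    have sq: "sqrt (2 * real n) * sqrt (2 * real n) = 2 * real n" by simp
    have tpos: "0 < t" unfolding t_def using np by simp
    have "sqrt (2 * real n) \<le> sqrt (real n * real n)"
      using np by (intro real_sqrt_le_mono) (simp add: mult_right_mono)
    hence "sqrt (2 * real n) \<le> real n" by simp
    hence t1: "t \<le> 1" unfolding t_def using np by simp
    have gm: "(\<lambda>x. ennreal (gfun t x)) \<in> borel_measurable borel"
      unfolding gfun_def by measurable
    have "(\<integral>\<^sup>+ \<omega>. ennreal (real (max_fit n X \<omega>)) \<partial>M)
        \<le> (\<integral>\<^sup>+ \<omega>. (\<Sum>i=1..n. ennreal (gfun t (X i \<omega>))) + ennreal (1/t) \<partial>M)"
    proof (rule nn_integral_mono)
      fix \<omega>
      have "ennreal (real (max_fit n X \<omega>)) \<le> ennreal ((\<Sum>i=1..n. gfun t (X i \<omega>)) + 1/t)"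
        by (rule ennreal_leI) (rule max_fit_bound[OF tpos])
      also have "\<dots> = (\<Sum>i=1..n. ennreal (gfun t (X i \<omega>))) + ennreal (1/t)"
        using tpos gfun_nonneg[OF tpos]
        by (simp add: ennreal_plus sum_nonneg sum_ennreal)
      finally show "ennreal (real (max_fit n X \<omega>)) \<le> (\<Sum>i=1..n. ennreal (gfun t (X i \<omega>))) + ennreal (1/t)" .
    qed
    also have "\<dots> = (\<Sum>i=1..n. \<integral>\<^sup>+ \<omega>. ennreal (gfun t (X i \<omega>)) \<partial>M) + ennreal (1/t)"
    proof -
      have mi: "\<And>i. i \<in> {1..n} \<Longrightarrow> (\<lambda>\<omega>. ennreal (gfun t (X i \<omega>))) \<in> borel_measurable M"
        using measurable_compose[OF meas gm] by (simp add: comp_def)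
      have "(\<integral>\<^sup>+ \<omega>. (\<Sum>i=1..n. ennreal (gfun t (X i \<omega>))) + ennreal (1/t) \<partial>M)
         = (\<integral>\<^sup>+ \<omega>. (\<Sum>i=1..n. ennreal (gfun t (X i \<omega>))) \<partial>M) + (\<integral>\<^sup>+ \<omega>. ennreal (1/t) \<partial>M)"
        by (rule nn_integral_add) (use mi in auto)
      also have "(\<integral>\<^sup>+ \<omega>. (\<Sum>i=1..n. ennreal (gfun t (X i \<omega>))) \<partial>M)
          = (\<Sum>i=1..n. \<integral>\<^sup>+ \<omega>. ennreal (gfun t (X i \<omega>)) \<partial>M)"
        by (rule nn_integral_sum) (rule mi)
      also have "(\<integral>\<^sup>+ \<omega>. ennreal (1/t) \<partial>M) = ennreal (1/t)"
        using prob_space.emeasure_space_1[OF P] by simp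
      finally show ?thesis .
    qed
    also have "(\<Sum>i=1..n. \<integral>\<^sup>+ \<omega>. ennreal (gfun t (X i \<omega>)) \<partial>M)
        = (\<Sum>i=1..n. \<integral>\<^sup>+ x. ennreal (gfun t x) \<partial>distr M lborel (X i))"
      by (rule sum.cong[OF refl], rule nn_integral_distr[symmetric])
         (use meas gm in auto)
    also have "\<dots> = (\<integral>\<^sup>+x. ennreal (real n * indicator {0<..<1} x) * ennreal (gfun t x) \<partial>lborel)"
      by (rule SD) (auto simp: gm)
    also have "\<dots> = ennreal (real n * t/2)" by (rule int2[OF tpos t1])
    also have "ennreal (real n * t/2) + ennreal (1/t) = ennreal (real n * t/2 + 1/t)"
      using tpos by (simp add: ennreal_plus)
    also have "real n * t/2 + 1/t = sqrt (2 * real n)"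
    proof -
      have sp: "sqrt (2 * real n) > 0" using np by simp
      have "real n * t/2 = sqrt (2 * real n) / 2" unfolding t_def using np by simp
      moreover have "1/t = sqrt (2 * real n) / 2"
        unfolding t_def using np sp sq by (simp add: field_simps)
      ultimately show ?thesis by simp
    qed
    finally show ?thesis .
  qed
  show ?thesis using part1 part2 by blast
qed

end
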